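(* Let $(C,D)$ define an irreducible MSPP (a MAP with $C$ diagonal). Then the squared coefficient of variation of the event-stationary inter-event time satisfies $c^2\ge 1$; equivalently $\boldsymbol{\pi}C\mathbf{1}\,\boldsymbol{\pi}C^{-1}\mathbf{1}\ge 1$.
   Context: A Markovian arrival process (MAP) of order $p$ is specified by $p\times p$ real matrices $C$ and $D$ such that $D$ has nonnegative entries, $C$ has nonnegative off-diagonal entries, and $Q=C+D$ is the generator (row sums zero) of an irreducible continuous-time Markov chain on $\{1,\dots,p\}$; $C$ is assumed nonsingular. An MSPP is a MAP with $C$ diagonal. $\mathbf{1}$ is the all-ones column vector; $\boldsymbol{\pi}$ is the stationary distribution of $Q$; $\boldsymbol{\alpha}$ is the stationary distribution of $P=(-C)^{-1}D$. The event-stationary inter-event time $T_1^{\alpha}$ has $\mathbb{P}(T_1^{\alpha}>t)=\boldsymbol{\alpha}e^{Ct}\mathbf{1}$, and $c^2=\mathrm{Var}(T_1^{\alpha})/\mathbb{E}^2[T_1^{\alpha}]$, which satisfies $c^2+1=2\,\boldsymbol{\pi}C\mathbf{1}\,\boldsymbol{\pi}C^{-1}\mathbf{1}$. *)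

theory Defs
  imports "HOL-Analysis.Analysis"
begin

definition generator :: "real^'n^'n \<Rightarrow> bool" where
  "generator Q \<longleftrightarrow> (\<forall>i j. i \<noteq> j \<longrightarrow> Q $ i $ j \<ge> 0) \<and> (\<forall>i. (\<Sum>j\<in>UNIV. Q $ i $ j) = 0)"

definition irreducible_generator :: "real^'n^'n \<Rightarrow> bool" where
  "irreducible_generator Q \<longleftrightarrow> generator Q \<and>
     (\<forall>i j. (i, j) \<in> {(a, b). a \<noteq> b \<and> Q $ a $ b > 0}\<^sup>*)"

definition is_MAP :: "real^'n^'n \<Rightarrow> real^'n^'n \<Rightarrow> bool" where
  "is_MAP C D \<longleftrightarrow> (\<forall>i j. D $ i $ j \<ge> 0) \<and> (\<forall>i j. i \<noteq> j \<longrightarrow> C $ i $ j \<ge> 0)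
     \<and> irreducible_generator (C + D) \<and> invertible C"

definition is_MSPP :: "real^'n^'n \<Rightarrow> real^'n^'n \<Rightarrow> bool" where
  "is_MSPP C D \<longleftrightarrow> is_MAP C D \<and> (\<forall>i j. i \<noteq> j \<longrightarrow> C $ i $ j = 0)"

definition stationary_dist :: "real^'n^'n \<Rightarrow> real^'n \<Rightarrow> bool" where
  "stationary_dist Q p \<longleftrightarrow> (\<forall>i. p $ i \<ge> 0) \<and> (\<Sum>i\<in>UNIV. p $ i) = 1 \<and> p v* Q = 0"

end

theory Submission
  imports Defs
begin

lemma cs_ineq:
  fixes p a :: "'n::finite \<Rightarrow> real"
  assumes p: "\<And>i. p i \<ge> 0" and a: "\<And>i. a i > 0"
  shows "(\<Sum>i\<in>UNIV. p i) ^ 2 \<le> (\<Sum>i\<in>UNIV. p i * a i) * (\<Sum>j\<in>UNIV. p j / a j)"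
proof -
  have key: "2 * (p i * p j) \<le> p i * p j * (a i / a j) + p j * p i * (a j / a i)" for i j
  proof -
    have "2 \<le> a i / a j + a j / a i"
    proof -
      have "(a i - a j)^2 \<ge> 0" by simp
      hence "2 * (a i * a j) \<le> a i * a i + a j * a j" by (simp add: power2_eq_square algebra_simps)
      thus ?thesis using a[of i] a[of j] by (simp add: field_simps)
    qed
    hence "p i * p j * 2 \<le> p i * p j * (a i / a j + a j / a i)"
      using p[of i] p[of j] by (intro mult_left_mono) auto
    thus ?thesis by (simp add: algebra_simps)
  qed
  have L: "(\<Sum>i\<in>UNIV. p i) ^ 2 = (\<Sum>i\<in>UNIV. \<Sum>j\<in>UNIV. p i * p j)"
    by (simp add: power2_eq_square sum_product)
  have R: "(\<Sum>i\<in>UNIV. p i * a i) * (\<Sum>j\<in>UNIV. p j / a j) = (\<Sum>i\<in>UNIV. \<Sum>j\<in>UNIV. p i * p j * (a i / a j))"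
    by (simp add: sum_product algebra_simps)
  have S: "(\<Sum>i\<in>UNIV. \<Sum>j\<in>UNIV. p i * p j * (a i / a j)) = (\<Sum>i\<in>UNIV. \<Sum>j\<in>UNIV. p j * p i * (a j / a i))"
    by (rule sum.swap)
  have "2 * (\<Sum>i\<in>UNIV. \<Sum>j\<in>UNIV. p i * p j) \<le> 
        (\<Sum>i\<in>UNIV. \<Sum>j\<in>UNIV. p i * p j * (a i / a j)) + (\<Sum>i\<in>UNIV. \<Sum>j\<in>UNIV. p j * p i * (a j / a i))"
    unfolding sum_distrib_left sum.distrib[symmetric]
    by (intro sum_mono key)
  thus ?thesis using L R S by linarith
qed

theorem corollary1:
  fixes C D :: "real^'n^'n" and p :: "real^'n"
  assumes "is_MSPP C D"
    and "stationary_dist (C + D) p"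
  shows "(p \<bullet> (C *v vec 1)) * (p \<bullet> (matrix_inv C *v vec 1)) \<ge> 1"
proof -
  define c where "c i = C $ i $ i" for i
  have diag: "\<And>i j. i \<noteq> j \<Longrightarrow> C $ i $ j = 0" using assms(1) unfolding is_MSPP_def by auto
  have Dnn: "\<And>i j. D $ i $ j \<ge> 0" using assms(1) unfolding is_MSPP_def is_MAP_def by auto
  have inv: "invertible C" using assms(1) unfolding is_MSPP_def is_MAP_def by auto
  have rows: "\<And>i. (\<Sum>j\<in>UNIV. (C + D) $ i $ j) = 0"
    using assms(1) unfolding is_MSPP_def is_MAP_def irreducible_generator_def generator_def by auto
  have Cv: "C *v x = (\<chi> i. c i * x $ i)" for x
  proof -
    have "(\<Sum>j\<in>UNIV. C $ i $ j * x $ j) = c i * x $ i" for i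
      by (subst sum.remove[of _ i]) (auto simp: c_def diag)
    thus ?thesis by (simp add: matrix_vector_mult_def vec_eq_iff)
  qed
  have cle: "c i \<le> 0" for i
  proof -
    have "(\<Sum>j\<in>UNIV. (C + D) $ i $ j) = (\<Sum>j\<in>UNIV. C $ i $ j) + (\<Sum>j\<in>UNIV. D $ i $ j)"
      by (simp add: sum.distrib)
    moreover have "(\<Sum>j\<in>UNIV. C $ i $ j) = c i"
      by (subst sum.remove[of _ i]) (auto simp: c_def diag)
    moreover have "(\<Sum>j\<in>UNIV. D $ i $ j) \<ge> 0" by (intro sum_nonneg Dnn)
    ultimately show ?thesis using rows[of i] by linarith
  qed
  define v where "v = matrix_inv C *v vec 1"
  have "C ** matrix_inv C = mat 1"
    using inv unfolding invertible_def matrix_inv_def by (rule someI_ex[THEN conjunct1])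
  hence "C *v v = vec 1" unfolding v_def by (simp add: matrix_vector_mul_assoc)
  hence cv: "c i * v $ i = 1" for i using Cv[of v] by (simp add: vec_eq_iff)
  have cneg: "c i < 0" for i using cle[of i] cv[of i] by (cases "c i = 0") auto
  have vi: "v $ i = 1 / c i" for i using cv[of i] cneg[of i] by (simp add: field_simps)
  define a where "a i = - c i" for i
  have apos: "a i > 0" for i using cneg[of i] by (simp add: a_def)
  have pnn: "\<And>i. p $ i \<ge> 0" and p1: "(\<Sum>i\<in>UNIV. p $ i) = 1"
    using assms(2) unfolding stationary_dist_def by auto
  have e1: "p \<bullet> (C *v vec 1) = - (\<Sum>i\<in>UNIV. p $ i * a i)"
    by (simp add: Cv inner_vec_def a_def sum_negf[symmetric])
  have e2: "p \<bullet> v = - (\<Sum>i\<in>UNIV. p $ i / a i)"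
    by (simp add: vi inner_vec_def a_def sum_negf[symmetric])
  have "(\<Sum>i\<in>UNIV. p $ i) ^ 2 \<le> (\<Sum>i\<in>UNIV. p $ i * a i) * (\<Sum>j\<in>UNIV. p $ j / a j)"
    by (rule cs_ineq) (auto intro: pnn apos)
  thus ?thesis using e1 e2 p1 unfolding v_def by simp
qed

end
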